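(* Let $G=T_1^{r_1}\times\cdots\times T_m^{r_m}$, where $T_1,\dots,T_m$ are pairwise non-isomorphic non-abelian finite simple groups and $r_1,\dots,r_m$ are positive integers. Then \[ \gamma^{\mathrm{ss}}_{\mathrm{cp}}(G)\le\max\{\gamma^{\mathrm{ss}}_{\mathrm{cp}}(T_1),\dots,\gamma^{\mathrm{ss}}_{\mathrm{cp}}(T_m)\}. \]
   Context: A factorization $G=A_1\cdots A_k$ (setwise) of a finite group $G$ with each $A_i$ conjugate in $G$ to $A\le G$ is a special solvable cp-factorization if (i) $A$ is solvable, (ii) $N_G(A)=A$, and (iii) for every $\alpha\in\mathrm{Aut}(G)$ there is $g\in G$ with $A^\alpha=A^g$. $\gamma^{\mathrm{ss}}_{\mathrm{cp}}(G)$ is the minimal length of a special solvable cp-factorization of $G$. *)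

theory Defs
  imports "HOL-Algebra.Algebra" "HOL-Algebra.Product_Groups" "HOL-Algebra.Solvable_Groups"
          "HOL-Algebra.SimpleGroups" "HOL-Algebra.Bij" "HOL-Library.Extended_Nat"
begin

definition conj_set :: "('a, 'b) monoid_scheme \<Rightarrow> 'a \<Rightarrow> 'a set \<Rightarrow> 'a set" where
  "conj_set G g A = (g <#\<^bsub>G\<^esub> A) #>\<^bsub>G\<^esub> (inv\<^bsub>G\<^esub> g)"

definition normalizer_set :: "('a, 'b) monoid_scheme \<Rightarrow> 'a set \<Rightarrow> 'a set" where
  "normalizer_set G A = {g \<in> carrier G. conj_set G g A = A}"

definition set_prod_list :: "('a, 'b) monoid_scheme \<Rightarrow> 'a set list \<Rightarrow> 'a set" where
  "set_prod_list G As = foldr (set_mult G) As {\<one>\<^bsub>G\<^esub>}"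

definition special_solvable_cp_fact :: "('a, 'b) monoid_scheme \<Rightarrow> 'a set \<Rightarrow> 'a set list \<Rightarrow> bool" where
  "special_solvable_cp_fact G A As \<longleftrightarrow>
     subgroup A G \<and> As \<noteq> [] \<and>
     (\<forall>B \<in> set As. \<exists>g \<in> carrier G. B = conj_set G g A) \<and>
     set_prod_list G As = carrier G \<and>
     solvable (G\<lparr>carrier := A\<rparr>) \<and>
     normalizer_set G A = A \<and>
     (\<forall>\<alpha> \<in> auto G. \<exists>g \<in> carrier G. \<alpha> ` A = conj_set G g A)"

text \<open>gamma^ss_cp(G): minimal length; infinity if no such factorization exists.\<close>
definition gamma_ss_cp :: "('a, 'b) monoid_scheme \<Rightarrow> enat" where
  "gamma_ss_cp G = Inf {enat (length As) | A As. special_solvable_cp_fact G A As}"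

end

theory Submission
  imports Defs
begin
lemma conj_set_eq:
  "conj_set G g A = (\<lambda>a. g \<otimes>\<^bsub>G\<^esub> a \<otimes>\<^bsub>G\<^esub> inv\<^bsub>G\<^esub> g) ` A"
  unfolding conj_set_def l_coset_def r_coset_def by auto


lemma (in group) conj_set_one:
  assumes "A \<subseteq> carrier G" shows "conj_set G \<one> A = A"
  using assms unfolding conj_set_eq by (auto simp: image_iff subset_iff)

lemma (in group) subgroup_mult_carrier:
  assumes "subgroup A G" shows "A <#> carrier G = carrier G"
proof
  show "A <#> carrier G \<subseteq> carrier G" using assms
    unfolding set_mult_def by (auto dest: subgroup.mem_carrier)
  show "carrier G \<subseteq> A <#> carrier G"
  proof
    fix x assume "x \<in> carrier G"
    then have "x = \<one> \<otimes> x" by simp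
    then show "x \<in> A <#> carrier G" unfolding set_mult_def
      using subgroup.one_closed[OF assms] \<open>x \<in> carrier G\<close> by blast
  qed
qed

lemma (in group) set_prod_list_pad:
  assumes "subgroup A G" "set_prod_list G As = carrier G"
  shows "set_prod_list G (replicate n A @ As) = carrier G"
  using assms by (induction n) (auto simp: set_prod_list_def subgroup_mult_carrier)




lemma solvable_trivial:
  assumes "carrier H = {\<one>\<^bsub>H\<^esub>}" shows "solvable H"
  unfolding solvable_def using assms solvable_seq.unity[of H] by simp

lemma solvable_product:
  assumes "finite I" "\<And>i. i \<in> I \<Longrightarrow> group (G i) \<and> solvable (G i)"
  shows "solvable (product_group I G)"
  using assms
proof (induction I rule: finite_induct)
  case empty
  show ?case by (rule solvable_trivial) (simp add: PiE_empty_domain restrict_def)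
next
  case (insert i I)
  have grp: "\<And>j. j \<in> insert i I \<Longrightarrow> group (G j)" using insert by blast
  have grpI: "\<And>j. j \<in> I \<Longrightarrow> group (G j)" using insert by blast
  interpret Gi: group "G i" using grp by blast
  define f where "f = (\<lambda>t. \<lambda>j\<in>insert i I. if j = i then t else \<one>\<^bsub>G j\<^esub>)"
  define g where "g = (\<lambda>x::'a \<Rightarrow> 'b. restrict x I)"
  have hf: "group_hom (G i) (product_group (insert i I) G) f"
    unfolding group_hom_def group_hom_axioms_def
  proof (intro conjI)
    show "group (G i)" by (rule Gi.is_group)
    show "group (product_group (insert i I) G)" by (rule product_group) (rule grp)
    show "f \<in> hom (G i) (product_group (insert i I) G)"
      unfolding hom_def f_def using grp by (auto simp: PiE_iff group.is_monoid)
  qed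
  have hg: "group_hom (product_group (insert i I) G) (product_group I G) g"
    unfolding group_hom_def group_hom_axioms_def
  proof (intro conjI)
    show "group (product_group I G)" by (rule product_group) (rule grpI)
    show "group (product_group (insert i I) G)" by (rule product_group) (rule grp)
    show "g \<in> hom (product_group (insert i I) G) (product_group I G)"
      unfolding hom_def g_def by (auto simp: PiE_iff)
  qed
  have surj: "g ` carrier (product_group (insert i I) G) = carrier (product_group I G)"
  proof
    show "g ` carrier (product_group (insert i I) G) \<subseteq> carrier (product_group I G)"
      unfolding g_def by (auto simp: PiE_iff)
    show "carrier (product_group I G) \<subseteq> g ` carrier (product_group (insert i I) G)"
    proof
      fix y assume y: "y \<in> carrier (product_group I G)"
      define x where "x = (\<lambda>j\<in>insert i I. if j = i then \<one>\<^bsub>G i\<^esub> else y j)"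
      have "x \<in> carrier (product_group (insert i I) G)" using y by (auto simp: x_def PiE_iff)
      moreover have "g x = y" using y insert(2) by (auto simp: x_def g_def PiE_iff extensional_def)
      ultimately show "y \<in> g ` carrier (product_group (insert i I) G)" by blast
    qed
  qed
  have ker: "kernel (product_group (insert i I) G) (product_group I G) g \<subseteq> f ` carrier (G i)"
  proof
    fix x assume "x \<in> kernel (product_group (insert i I) G) (product_group I G) g"
    then have x: "x \<in> (\<Pi>\<^sub>E j\<in>insert i I. carrier (G j))" and gx: "restrict x I = (\<lambda>j\<in>I. \<one>\<^bsub>G j\<^esub>)"
      unfolding kernel_def g_def by auto
    have "x = f (x i)"
    proof
      fix j show "x j = f (x i) j"
      proof (cases "j \<in> insert i I")
        case True
        then show ?thesis
        proof (cases "j = i")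
          case False then have "j \<in> I" using True by auto
          then have "x j = \<one>\<^bsub>G j\<^esub>" using fun_cong[OF gx, of j] by simp
          then show ?thesis using False True by (simp add: f_def)
        qed (simp add: f_def)
      next
        case False then show ?thesis using x by (auto simp: f_def PiE_iff extensional_def)
      qed
    qed
    moreover have "x i \<in> carrier (G i)" using x by auto
    ultimately show "x \<in> f ` carrier (G i)" by blast
  qed
  show ?case
    by (rule solvable_condition[OF hf hg surj ker]) (use insert in auto)
qed

lemma product_subgroup_eq:
  "(product_group I G)\<lparr>carrier := PiE I A\<rparr> = product_group I (\<lambda>i. (G i)\<lparr>carrier := A i\<rparr>)"
  by (simp add: product_group_def)




lemma (in simple_group) central_trivial:
  assumes nc: "\<not> comm_group G" and z: "z \<in> carrier G" and c: "\<And>t. t \<in> carrier G \<Longrightarrow> z \<otimes> t = t \<otimes> z"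
  shows "z = \<one>"
proof -
  define Z where "Z = {z \<in> carrier G. \<forall>t\<in>carrier G. z \<otimes> t = t \<otimes> z}"
  have sub: "subgroup Z G"
  proof (rule subgroupI)
    show "Z \<subseteq> carrier G" "Z \<noteq> {}" unfolding Z_def by auto
    show "inv a \<in> Z" if "a \<in> Z" for a
    proof -
      have a: "a \<in> carrier G" "\<And>t. t \<in> carrier G \<Longrightarrow> a \<otimes> t = t \<otimes> a" using that Z_def by auto
      have ia: "inv a \<otimes> t = t \<otimes> inv a" if t: "t \<in> carrier G" for t
      proof -
        have "inv a \<otimes> t = inv a \<otimes> t \<otimes> (a \<otimes> inv a)" using a(1) t by simp
        also have "\<dots> = inv a \<otimes> (t \<otimes> a) \<otimes> inv a" using a(1) t by (simp add: m_assoc)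
        also have "\<dots> = inv a \<otimes> (a \<otimes> t) \<otimes> inv a" using a t by simp
        also have "\<dots> = t \<otimes> inv a" using a(1) t by (simp add: m_assoc[symmetric])
        finally show ?thesis .
      qed
      show ?thesis using ia a(1) unfolding Z_def by blast
    qed
    show "a \<otimes> b \<in> Z" if "a \<in> Z" "b \<in> Z" for a b
    proof -
      have a: "a \<in> carrier G" "\<And>t. t \<in> carrier G \<Longrightarrow> a \<otimes> t = t \<otimes> a"
       and b: "b \<in> carrier G" "\<And>t. t \<in> carrier G \<Longrightarrow> b \<otimes> t = t \<otimes> b" using that Z_def by auto
      have ab: "a \<otimes> b \<otimes> t = t \<otimes> (a \<otimes> b)" if t: "t \<in> carrier G" for t
      proof -
        have "a \<otimes> b \<otimes> t = a \<otimes> (b \<otimes> t)" using a(1) b(1) t by (rule m_assoc)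
        also have "\<dots> = a \<otimes> (t \<otimes> b)" by (simp only: b(2)[OF t])
        also have "\<dots> = a \<otimes> t \<otimes> b" using a(1) t b(1) by (rule m_assoc[symmetric])
        also have "\<dots> = t \<otimes> a \<otimes> b" by (simp only: a(2)[OF t])
        also have "\<dots> = t \<otimes> (a \<otimes> b)" using t a(1) b(1) by (rule m_assoc)
        finally show ?thesis .
      qed
      show ?thesis using ab a(1) b(1) unfolding Z_def by blast
    qed
  qed
  have "Z \<lhd> G"
    unfolding normal_inv_iff
  proof (intro conjI sub ballI)
    fix x h assume x: "x \<in> carrier G" and h: "h \<in> Z"
    have hc: "h \<in> carrier G" "h \<otimes> x = x \<otimes> h" using h x unfolding Z_def by auto
    have "x \<otimes> h \<otimes> inv x = h \<otimes> x \<otimes> inv x" using hc by simp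
    also have "\<dots> = h" using hc(1) x by (simp add: m_assoc)
    finally have "x \<otimes> h \<otimes> inv x = h" .
    then show "x \<otimes> h \<otimes> inv x \<in> Z" using h by simp
  qed
  then have "Z = carrier G \<or> Z = {\<one>}" by (rule no_real_normal_subgroup)
  moreover have "Z \<noteq> carrier G"
  proof
    assume "Z = carrier G"
    then have "\<forall>x\<in>carrier G. \<forall>y\<in>carrier G. x \<otimes> y = y \<otimes> x" unfolding Z_def by blast
    then have "comm_group G" by (intro group_comm_groupI) blast
    with nc show False by simp
  qed
  ultimately have "Z = {\<one>}" by simp
  moreover have "z \<in> Z" using z c unfolding Z_def by auto
  ultimately show ?thesis by simp
qed

lemma (in simple_group) nontriv_elem: "\<exists>t\<in>carrier G. t \<noteq> \<one>"
  using simple_not_triv one_closed by blast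

locale prodgrp =
  fixes I :: "'i set" and G :: "'i \<Rightarrow> ('a, 'b) monoid_scheme"
  assumes grp: "\<And>i. i \<in> I \<Longrightarrow> group (G i)"
begin

abbreviation "P \<equiv> product_group I G"

lemma P_group: "group P" using grp by simp


lemma Pmult_apply [simp]: "j \<in> I \<Longrightarrow> (x \<otimes>\<^bsub>P\<^esub> y) j = x j \<otimes>\<^bsub>G j\<^esub> y j"
  by simp

lemma Pinv_apply [simp]: "x \<in> carrier P \<Longrightarrow> j \<in> I \<Longrightarrow> (inv\<^bsub>P\<^esub> x) j = inv\<^bsub>G j\<^esub> (x j)"
  using grp by simp

lemma P_eqI: "x \<in> carrier P \<Longrightarrow> y \<in> carrier P \<Longrightarrow> (\<And>j. j \<in> I \<Longrightarrow> x j = y j) \<Longrightarrow> x = y"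
  by (rule extensionalityI[of x I y]) (auto simp: PiE_iff)

end

locale psimp = prodgrp +
  assumes sg: "\<And>i. i \<in> I \<Longrightarrow> simple_group (G i)"
    and nc: "\<And>i. i \<in> I \<Longrightarrow> \<not> comm_group (G i)"
begin

definition emb where "emb i t = (\<lambda>j\<in>I. if j = i then t else \<one>\<^bsub>G j\<^esub>)"
definition N where "N i = emb i ` carrier (G i)"

lemma emb_carrier: "i \<in> I \<Longrightarrow> t \<in> carrier (G i) \<Longrightarrow> emb i t \<in> carrier P"
  using grp by (auto simp: emb_def PiE_iff group.is_monoid)

lemma emb_apply: "i \<in> I \<Longrightarrow> emb i t i = t"
  by (simp add: emb_def)

lemma emb_apply_other: "j \<in> I \<Longrightarrow> j \<noteq> i \<Longrightarrow> emb i t j = \<one>\<^bsub>G j\<^esub>"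
  by (simp add: emb_def)

lemma emb_mult: "i \<in> I \<Longrightarrow> s \<in> carrier (G i) \<Longrightarrow> t \<in> carrier (G i) \<Longrightarrow>
    emb i (s \<otimes>\<^bsub>G i\<^esub> t) = emb i s \<otimes>\<^bsub>P\<^esub> emb i t"
  using grp by (auto simp: emb_def group.is_monoid intro!: restrict_ext)

lemma emb_one: "emb i \<one>\<^bsub>G i\<^esub> = \<one>\<^bsub>P\<^esub>"
  by (auto simp: emb_def intro: restrict_ext)

lemma emb_inv: assumes "i \<in> I" "t \<in> carrier (G i)"
  shows "emb i (inv\<^bsub>G i\<^esub> t) = inv\<^bsub>P\<^esub> (emb i t)"
proof -
  have gi: "group (G i)" using grp assms by blast
  have "emb i (inv\<^bsub>G i\<^esub> t) \<otimes>\<^bsub>P\<^esub> emb i t = \<one>\<^bsub>P\<^esub>"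
    using emb_mult[OF assms(1) group.inv_closed[OF gi assms(2)] assms(2)] group.l_inv[OF gi assms(2)] emb_one
    by simp
  then show ?thesis
    by (rule group.inv_equality[OF P_group _ emb_carrier[OF assms] emb_carrier[OF assms(1) group.inv_closed[OF gi assms(2)]], symmetric])
qed

lemma emb_inj: "i \<in> I \<Longrightarrow> emb i s = emb i t \<Longrightarrow> s = t"
  by (metis emb_apply)

lemma N_sub_carrier: "i \<in> I \<Longrightarrow> N i \<subseteq> carrier P"
  using emb_carrier by (auto simp: N_def)

lemma N_elem: "i \<in> I \<Longrightarrow> z \<in> N i \<Longrightarrow> z = emb i (z i) \<and> z i \<in> carrier (G i)"
  by (auto simp: N_def emb_apply)

lemma N_subset_eq: assumes "p \<in> I" "p' \<in> I" "N p' \<subseteq> N p" shows "p' = p"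
proof (rule ccontr)
  assume ne: "p' \<noteq> p"
  obtain t where t: "t \<in> carrier (G p')" "t \<noteq> \<one>\<^bsub>G p'\<^esub>"
    using simple_group.nontriv_elem[OF sg[OF assms(2)]] by blast
  have "emb p' t \<in> N p" using assms t by (auto simp: N_def)
  then obtain s where "emb p' t = emb p s" by (auto simp: N_def)
  then have "emb p' t p' = emb p s p'" by simp
  then show False using ne t assms by (simp add: emb_apply emb_apply_other)
qed

end



lemma (in group) commutator_one:
  assumes "t \<in> carrier G" "x \<in> carrier G" "t \<otimes> x \<otimes> inv t \<otimes> inv x = \<one>"
  shows "t \<otimes> x = x \<otimes> t"
proof -
  have "t \<otimes> x \<otimes> inv t = \<one> \<otimes> x" using assms inv_solve_right'[of "\<one>" "t \<otimes> x \<otimes> inv t" x] by simp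
  then have "t \<otimes> x \<otimes> inv t = x" using assms by simp
  then show ?thesis using assms inv_solve_right'[of x "t \<otimes> x" t] by simp
qed

context psimp
begin

lemma one_P_apply: "j \<in> I \<Longrightarrow> \<one>\<^bsub>P\<^esub> j = \<one>\<^bsub>G j\<^esub>" by simp

lemma normal_contains_N:
  assumes M: "M \<lhd> P" and ne: "M \<noteq> {\<one>\<^bsub>P\<^esub>}"
  shows "\<exists>q\<in>I. N q \<subseteq> M"
proof -
  have Msub: "subgroup M P" using M by (rule normal_imp_subgroup)
  interpret Mn: normal M P using M .
  have "\<one>\<^bsub>P\<^esub> \<in> M" by (rule subgroup.one_closed[OF Msub])
  then obtain m where m: "m \<in> M" "m \<noteq> \<one>\<^bsub>P\<^esub>" using ne by blast
  have mc: "m \<in> carrier P" using m subgroup.subset[OF Msub] by blast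
  have "\<exists>q\<in>I. m q \<noteq> \<one>\<^bsub>G q\<^esub>"
  proof (rule ccontr)
    assume "\<not> ?thesis"
    then have "m = \<one>\<^bsub>P\<^esub>"
      by (intro P_eqI mc monoid.one_closed[OF group.is_monoid[OF P_group]]) auto
    with m show False by simp
  qed
  then obtain q where q: "q \<in> I" "m q \<noteq> \<one>\<^bsub>G q\<^esub>" by blast
  interpret Gq: simple_group "G q" using sg q by blast
  have mq: "m q \<in> carrier (G q)" using mc q by auto
  obtain t where t: "t \<in> carrier (G q)" "t \<otimes>\<^bsub>G q\<^esub> m q \<noteq> m q \<otimes>\<^bsub>G q\<^esub> t"
    using Gq.central_trivial[OF nc[OF q(1)] mq] q(2) by metis
  define e where "e = emb q t"
  have ec: "e \<in> carrier P" using emb_carrier q t by (simp add: e_def)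
  define c where "c = e \<otimes>\<^bsub>P\<^esub> m \<otimes>\<^bsub>P\<^esub> inv\<^bsub>P\<^esub> e \<otimes>\<^bsub>P\<^esub> inv\<^bsub>P\<^esub> m"
  have cM: "c \<in> M" unfolding c_def
    using Mn.inv_op_closed2[OF ec m(1)] subgroup.m_inv_closed[OF Msub m(1)] subgroup.m_closed[OF Msub] by blast
  have cc: "c \<in> carrier P" using cM subgroup.subset[OF Msub] by blast
  have cq: "c q = t \<otimes>\<^bsub>G q\<^esub> m q \<otimes>\<^bsub>G q\<^esub> inv\<^bsub>G q\<^esub> t \<otimes>\<^bsub>G q\<^esub> inv\<^bsub>G q\<^esub> m q"
    using q ec mc by (simp add: c_def e_def emb_apply group.inv_closed[OF P_group])
  have cj: "c j = \<one>\<^bsub>G j\<^esub>" if j: "j \<in> I" "j \<noteq> q" for j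
  proof -
    interpret Gj: group "G j" using grp j by blast
    have mj: "m j \<in> carrier (G j)" using mc j by auto
    have "c j = \<one>\<^bsub>G j\<^esub> \<otimes>\<^bsub>G j\<^esub> m j \<otimes>\<^bsub>G j\<^esub> inv\<^bsub>G j\<^esub> \<one>\<^bsub>G j\<^esub> \<otimes>\<^bsub>G j\<^esub> inv\<^bsub>G j\<^esub> m j"
      using j ec mc by (simp add: c_def e_def emb_apply_other group.inv_closed[OF P_group])
    also have "\<dots> = \<one>\<^bsub>G j\<^esub>" using mj by simp
    finally show ?thesis .
  qed
  have c_emb: "c = emb q (c q)"
    apply (rule P_eqI[OF cc emb_carrier[OF q(1)]])
    using cc q apply auto[1]
    using cj by (metis emb_apply emb_apply_other)
  have cq1: "c q \<noteq> \<one>\<^bsub>G q\<^esub>"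
  proof
    assume "c q = \<one>\<^bsub>G q\<^esub>"
    then have "t \<otimes>\<^bsub>G q\<^esub> m q = m q \<otimes>\<^bsub>G q\<^esub> t"
      using Gq.commutator_one[OF t(1) mq] cq by simp
    with t(2) show False by simp
  qed
  define H where "H = {s \<in> carrier (G q). emb q s \<in> M}"
  have Hsub: "subgroup H (G q)"
  proof (rule Gq.subgroupI)
    show "H \<subseteq> carrier (G q)" unfolding H_def by blast
    have "\<one>\<^bsub>G q\<^esub> \<in> H" unfolding H_def using emb_one subgroup.one_closed[OF Msub] by simp
    then show "H \<noteq> {}" by blast
    show "inv\<^bsub>G q\<^esub> a \<in> H" if "a \<in> H" for a
      using that emb_inv[OF q(1)] subgroup.m_inv_closed[OF Msub] unfolding H_def by auto
    show "a \<otimes>\<^bsub>G q\<^esub> b \<in> H" if "a \<in> H" "b \<in> H" for a b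
      using that emb_mult[OF q(1)] subgroup.m_closed[OF Msub] unfolding H_def by auto
  qed
  have "H \<lhd> G q"
    unfolding Gq.normal_inv_iff
  proof (intro conjI Hsub ballI)
    fix x h assume x: "x \<in> carrier (G q)" and h: "h \<in> H"
    have hc: "h \<in> carrier (G q)" using h H_def by blast
    have "emb q (x \<otimes>\<^bsub>G q\<^esub> h \<otimes>\<^bsub>G q\<^esub> inv\<^bsub>G q\<^esub> x) = emb q x \<otimes>\<^bsub>P\<^esub> emb q h \<otimes>\<^bsub>P\<^esub> inv\<^bsub>P\<^esub> (emb q x)"
      using x hc q(1) by (simp add: emb_mult emb_inv)
    also have "\<dots> \<in> M" using Mn.inv_op_closed2[OF emb_carrier[OF q(1) x]] h H_def by blast
    finally show "x \<otimes>\<^bsub>G q\<^esub> h \<otimes>\<^bsub>G q\<^esub> inv\<^bsub>G q\<^esub> x \<in> H" unfolding H_def using x hc by auto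
  qed
  then have "H = carrier (G q) \<or> H = {\<one>\<^bsub>G q\<^esub>}" by (rule Gq.no_real_normal_subgroup)
  moreover have "c q \<in> H" unfolding H_def using cc q(1) c_emb cM by auto
  ultimately have "H = carrier (G q)" using cq1 by blast
  then have "N q \<subseteq> M" unfolding N_def H_def by blast
  then show ?thesis using q by blast
qed

end



context psimp
begin

lemma iso_gh: "\<alpha> \<in> iso P P \<Longrightarrow> group_hom P P \<alpha>"
  unfolding group_hom_def group_hom_axioms_def using P_group by (auto simp: iso_iff)

lemma iso_image_normal:
  assumes a: "\<alpha> \<in> iso P P" and M: "M \<lhd> P" shows "\<alpha> ` M \<lhd> P"
proof -
  have gh: "group_hom P P \<alpha>" using a by (rule iso_gh)
  have Msub: "subgroup M P" using M by (rule normal_imp_subgroup)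
  have sur: "\<alpha> ` carrier P = carrier P" using a by (auto simp: iso_iff)
  show ?thesis unfolding group.normal_inv_iff[OF P_group]
  proof (intro conjI ballI)
    show "subgroup (\<alpha> ` M) P" by (rule group_hom.subgroup_img_is_subgroup[OF gh Msub])
    fix x h assume x: "x \<in> carrier P" and h: "h \<in> \<alpha> ` M"
    obtain x' where x': "x' \<in> carrier P" "x = \<alpha> x'" using x sur by blast
    obtain h' where h': "h' \<in> M" "h = \<alpha> h'" using h by blast
    have h'c: "h' \<in> carrier P" using h' subgroup.subset[OF Msub] by blast
    have "x \<otimes>\<^bsub>P\<^esub> h \<otimes>\<^bsub>P\<^esub> inv\<^bsub>P\<^esub> x = \<alpha> (x' \<otimes>\<^bsub>P\<^esub> h' \<otimes>\<^bsub>P\<^esub> inv\<^bsub>P\<^esub> x')"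
      using x' h' h'c group_hom.hom_inv[OF gh] hom_mult[OF group_hom.homh[OF gh]]
        group.inv_closed[OF P_group] monoid.m_closed[OF group.is_monoid[OF P_group]]
      by (simp del: mult_product_group carrier_product_group)
    moreover have "x' \<otimes>\<^bsub>P\<^esub> h' \<otimes>\<^bsub>P\<^esub> inv\<^bsub>P\<^esub> x' \<in> M"
      using normal.inv_op_closed2[OF M x'(1) h'(1)] .
    ultimately show "x \<otimes>\<^bsub>P\<^esub> h \<otimes>\<^bsub>P\<^esub> inv\<^bsub>P\<^esub> x \<in> \<alpha> ` M" by blast
  qed
qed

lemma N_char: "p \<in> I \<Longrightarrow> N p = {z \<in> carrier P. \<forall>j\<in>I. j \<noteq> p \<longrightarrow> z j = \<one>\<^bsub>G j\<^esub>}"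
proof
  assume p: "p \<in> I"
  show "N p \<subseteq> {z \<in> carrier P. \<forall>j\<in>I. j \<noteq> p \<longrightarrow> z j = \<one>\<^bsub>G j\<^esub>}"
    using N_sub_carrier[OF p] by (auto simp: N_def emb_apply_other)
  show "{z \<in> carrier P. \<forall>j\<in>I. j \<noteq> p \<longrightarrow> z j = \<one>\<^bsub>G j\<^esub>} \<subseteq> N p"
  proof
    fix z assume z: "z \<in> {z \<in> carrier P. \<forall>j\<in>I. j \<noteq> p \<longrightarrow> z j = \<one>\<^bsub>G j\<^esub>}"
    have zp: "z p \<in> carrier (G p)" using z p by auto
    have zc: "z \<in> carrier P" and zj: "\<And>j. j \<in> I \<Longrightarrow> j \<noteq> p \<Longrightarrow> z j = \<one>\<^bsub>G j\<^esub>" using z by auto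
    have ec: "emb p (z p) \<in> carrier P" by (rule emb_carrier[OF p zp])
    have "z = emb p (z p)"
    proof (rule P_eqI[OF zc ec])
      fix j assume j: "j \<in> I"
      show "z j = emb p (z p) j"
        using j p zj by (cases "j = p") (simp_all add: emb_apply emb_apply_other)
    qed
    then show "z \<in> N p" using zp unfolding N_def by blast
  qed
qed

lemma N_normal: assumes p: "p \<in> I" shows "N p \<lhd> P"
  unfolding group.normal_inv_iff[OF P_group]
proof (intro conjI ballI)
  interpret Gp: group "G p" using grp p by blast
  show "subgroup (N p) P"
  proof (rule group.subgroupI[OF P_group])
    show "N p \<subseteq> carrier P" by (rule N_sub_carrier[OF p])
    show "N p \<noteq> {}" unfolding N_def by blast
    show "inv\<^bsub>P\<^esub> a \<in> N p" if aN: "a \<in> N p" for a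
    proof -
      obtain x where x: "a = emb p x" "x \<in> carrier (G p)" using aN unfolding N_def by (rule imageE)
      then have "inv\<^bsub>P\<^esub> a = emb p (inv\<^bsub>G p\<^esub> x)" by (simp only: x(1) emb_inv[OF p x(2)])
      then show ?thesis using x Gp.inv_closed unfolding N_def by blast
    qed
    show "a \<otimes>\<^bsub>P\<^esub> b \<in> N p" if aN: "a \<in> N p" and bN: "b \<in> N p" for a b
    proof -
      obtain x where x: "a = emb p x" "x \<in> carrier (G p)" using aN unfolding N_def by (rule imageE)
      obtain y where y: "b = emb p y" "y \<in> carrier (G p)" using bN unfolding N_def by (rule imageE)
      have "a \<otimes>\<^bsub>P\<^esub> b = emb p (x \<otimes>\<^bsub>G p\<^esub> y)" by (simp only: x(1) y(1) emb_mult[OF p x(2) y(2)])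
      then show ?thesis using x y Gp.m_closed unfolding N_def by blast
    qed
  qed
  fix x h assume x: "x \<in> carrier P" and h: "h \<in> N p"
  have hc: "h \<in> carrier P" using h N_sub_carrier[OF p] by blast
  have hj: "\<forall>j\<in>I. j \<noteq> p \<longrightarrow> h j = \<one>\<^bsub>G j\<^esub>" using h N_char[OF p] by blast
  have c: "x \<otimes>\<^bsub>P\<^esub> h \<otimes>\<^bsub>P\<^esub> inv\<^bsub>P\<^esub> x \<in> carrier P"
    using x hc by (intro monoid.m_closed[OF group.is_monoid[OF P_group]] group.inv_closed[OF P_group])
  have "\<forall>j\<in>I. j \<noteq> p \<longrightarrow> (x \<otimes>\<^bsub>P\<^esub> h \<otimes>\<^bsub>P\<^esub> inv\<^bsub>P\<^esub> x) j = \<one>\<^bsub>G j\<^esub>"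
  proof (intro ballI impI)
    fix j assume j: "j \<in> I" "j \<noteq> p"
    interpret Gj: group "G j" using grp j by blast
    have xj: "x j \<in> carrier (G j)" using x j by auto
    have hj1: "h j = \<one>\<^bsub>G j\<^esub>" using hj j by blast
    have "(x \<otimes>\<^bsub>P\<^esub> h \<otimes>\<^bsub>P\<^esub> inv\<^bsub>P\<^esub> x) j = x j \<otimes>\<^bsub>G j\<^esub> h j \<otimes>\<^bsub>G j\<^esub> inv\<^bsub>G j\<^esub> (x j)"
      using j x by (simp only: Pmult_apply Pinv_apply)
    then show "(x \<otimes>\<^bsub>P\<^esub> h \<otimes>\<^bsub>P\<^esub> inv\<^bsub>P\<^esub> x) j = \<one>\<^bsub>G j\<^esub>"
      using hj1 xj by simp
  qed
  then show "x \<otimes>\<^bsub>P\<^esub> h \<otimes>\<^bsub>P\<^esub> inv\<^bsub>P\<^esub> x \<in> N p" using c N_char[OF p] by blast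
qed

lemma N_nontriv: assumes p: "p \<in> I" shows "N p \<noteq> {\<one>\<^bsub>P\<^esub>}"
proof
  assume e: "N p = {\<one>\<^bsub>P\<^esub>}"
  obtain t where t: "t \<in> carrier (G p)" "t \<noteq> \<one>\<^bsub>G p\<^esub>"
    using simple_group.nontriv_elem[OF sg[OF p]] by blast
  have "emb p t = \<one>\<^bsub>P\<^esub>" using e t unfolding N_def by blast
  then have "emb p t p = \<one>\<^bsub>P\<^esub> p" by simp
  then show False using t p by (simp add: emb_apply)
qed

lemma iso_image_nontriv:
  assumes a: "\<alpha> \<in> iso P P" and M: "subgroup M P" and ne: "M \<noteq> {\<one>\<^bsub>P\<^esub>}"
  shows "\<alpha> ` M \<noteq> {\<one>\<^bsub>P\<^esub>}"
proof
  assume e: "\<alpha> ` M = {\<one>\<^bsub>P\<^esub>}"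
  have gh: "group_hom P P \<alpha>" using a by (rule iso_gh)
  have inj: "inj_on \<alpha> (carrier P)" using a by (auto simp: iso_iff)
  have one: "\<alpha> \<one>\<^bsub>P\<^esub> = \<one>\<^bsub>P\<^esub>" by (rule group_hom.hom_one[OF gh])
  have "M \<subseteq> {\<one>\<^bsub>P\<^esub>}"
  proof
    fix m assume m: "m \<in> M"
    then have "\<alpha> m \<in> \<alpha> ` M" by blast
    then have "\<alpha> m = \<one>\<^bsub>P\<^esub>" using e by blast
    then have "\<alpha> m = \<alpha> \<one>\<^bsub>P\<^esub>" using one by simp
    moreover have "m \<in> carrier P" using m subgroup.subset[OF M] by blast
    ultimately show "m \<in> {\<one>\<^bsub>P\<^esub>}"
      using inj_onD[OF inj] monoid.one_closed[OF group.is_monoid[OF P_group]] by blast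
  qed
  then show False using ne subgroup.one_closed[OF M] by blast
qed

lemma iso_N:
  assumes a: "\<alpha> \<in> iso P P" and p: "p \<in> I"
  shows "\<exists>q\<in>I. \<alpha> ` N p = N q"
proof -
  have inj: "inj_on \<alpha> (carrier P)" and sur: "\<alpha> ` carrier P = carrier P" using a by (auto simp: iso_iff)
  define \<beta> where "\<beta> = inv_into (carrier P) \<alpha>"
  have b: "\<beta> \<in> iso P P" unfolding \<beta>_def by (rule group.iso_set_sym[OF P_group a])
  obtain q where q: "q \<in> I" "N q \<subseteq> \<alpha> ` N p"
    using normal_contains_N[OF iso_image_normal[OF a N_normal[OF p]]
        iso_image_nontriv[OF a normal_imp_subgroup[OF N_normal[OF p]] N_nontriv[OF p]]] by blast
  obtain p' where p': "p' \<in> I" "N p' \<subseteq> \<beta> ` N q"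
    using normal_contains_N[OF iso_image_normal[OF b N_normal[OF q(1)]]
        iso_image_nontriv[OF b normal_imp_subgroup[OF N_normal[OF q(1)]] N_nontriv[OF q(1)]]] by blast
  have "\<beta> ` \<alpha> ` N p = N p"
    using N_sub_carrier[OF p] inj unfolding \<beta>_def
    by (simp add: inv_into_image_cancel)
  then have "\<beta> ` N q \<subseteq> N p" using q(2) by blast
  then have "p' = p" using N_subset_eq[OF p p'(1)] p'(2) by blast
  then have "\<alpha> ` N p \<subseteq> \<alpha> ` \<beta> ` N q" using p'(2) by blast
  also have "\<alpha> ` \<beta> ` N q = N q"
    using N_sub_carrier[OF q(1)] sur unfolding \<beta>_def
    by (simp add: image_inv_into_cancel)
  finally show ?thesis using q by blast
qed

end



declare mult_product_group [simp del]

context psimp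
begin

lemma coord_formula:
  assumes h: "\<alpha> \<in> hom P P" and p: "p \<in> I" and q: "q \<in> I" and NN: "\<alpha> ` N p = N q"
    and x: "x \<in> carrier P"
  shows "\<alpha> x q = \<alpha> (emb p (x p)) q"
proof -
  interpret PG: group P by (rule P_group)
  interpret Gp: group "G p" using grp p by blast
  interpret Gq: simple_group "G q" using sg q by blast
  have xp: "x p \<in> carrier (G p)" using x p by auto
  define e where "e = emb p (x p)"
  have ec: "e \<in> carrier P" unfolding e_def by (rule emb_carrier[OF p xp])
  define y where "y = x \<otimes>\<^bsub>P\<^esub> inv\<^bsub>P\<^esub> e"
  have yc: "y \<in> carrier P" unfolding y_def using x ec by (intro PG.m_closed PG.inv_closed)
  have xy: "x = y \<otimes>\<^bsub>P\<^esub> e" unfolding y_def by (simp only: PG.m_assoc[OF x PG.inv_closed[OF ec] ec] PG.l_inv[OF ec] PG.r_one[OF x])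
  have yp: "y p = \<one>\<^bsub>G p\<^esub>"
    unfolding y_def using p x ec xp by (simp add: e_def emb_apply)
  have ycomm: "y \<otimes>\<^bsub>P\<^esub> emb p t = emb p t \<otimes>\<^bsub>P\<^esub> y" if t: "t \<in> carrier (G p)" for t
  proof (rule P_eqI)
    show "y \<otimes>\<^bsub>P\<^esub> emb p t \<in> carrier P" by (rule PG.m_closed[OF yc emb_carrier[OF p t]])
    show "emb p t \<otimes>\<^bsub>P\<^esub> y \<in> carrier P" by (rule PG.m_closed[OF emb_carrier[OF p t] yc])
    fix j assume j: "j \<in> I"
    interpret Gj: group "G j" using grp j by blast
    have yj: "y j \<in> carrier (G j)" using yc j by auto
    show "(y \<otimes>\<^bsub>P\<^esub> emb p t) j = (emb p t \<otimes>\<^bsub>P\<^esub> y) j"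
    proof (cases "j = p")
      case True then show ?thesis using j yp t by (simp add: emb_apply)
    next
      case False then show ?thesis using j yj by (simp add: emb_apply_other)
    qed
  qed
  have ayc: "\<alpha> y \<in> carrier P" using h yc by (rule hom_in_carrier)
  have ayq: "\<alpha> y q \<in> carrier (G q)" using ayc q by auto
  have "\<alpha> y q \<otimes>\<^bsub>G q\<^esub> u = u \<otimes>\<^bsub>G q\<^esub> \<alpha> y q" if u: "u \<in> carrier (G q)" for u
  proof -
    have "emb q u \<in> \<alpha> ` N p" using NN u unfolding N_def by blast
    then obtain t where t: "t \<in> carrier (G p)" "emb q u = \<alpha> (emb p t)" unfolding N_def by blast
    have "\<alpha> y \<otimes>\<^bsub>P\<^esub> \<alpha> (emb p t) = \<alpha> (emb p t) \<otimes>\<^bsub>P\<^esub> \<alpha> y"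
      using ycomm[OF t(1)] hom_mult[OF h yc emb_carrier[OF p t(1)]] hom_mult[OF h emb_carrier[OF p t(1)] yc]
      by simp
    then have "(\<alpha> y \<otimes>\<^bsub>P\<^esub> emb q u) q = (emb q u \<otimes>\<^bsub>P\<^esub> \<alpha> y) q" using t(2) by simp
    then show ?thesis using q by (simp add: emb_apply)
  qed
  then have ay1: "\<alpha> y q = \<one>\<^bsub>G q\<^esub>" using Gq.central_trivial[OF nc[OF q] ayq] by metis
  have "\<alpha> x = \<alpha> y \<otimes>\<^bsub>P\<^esub> \<alpha> e" using xy hom_mult[OF h yc ec] by simp
  then have "\<alpha> x q = \<alpha> y q \<otimes>\<^bsub>G q\<^esub> \<alpha> e q" using q by simp
  also have "\<dots> = \<alpha> e q"
  proof -
    have "\<alpha> e q \<in> carrier (G q)" using hom_in_carrier[OF h ec] q by auto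
    then show ?thesis using ay1 by simp
  qed
  finally show ?thesis by (simp add: e_def)
qed

lemma phi_iso:
  assumes a: "\<alpha> \<in> iso P P" and p: "p \<in> I" and q: "q \<in> I" and NN: "\<alpha> ` N p = N q"
  shows "(\<lambda>t. \<alpha> (emb p t) q) \<in> iso (G p) (G q)"
proof -
  have h: "\<alpha> \<in> hom P P" and inj: "inj_on \<alpha> (carrier P)" using a by (auto simp: iso_iff)
  have inN: "\<alpha> (emb p t) \<in> N q" if "t \<in> carrier (G p)" for t
    using NN that unfolding N_def by blast
  have eq: "\<alpha> (emb p t) = emb q (\<alpha> (emb p t) q)" if "t \<in> carrier (G p)" for t
    using N_elem[OF q inN[OF that]] by blast
  have cq: "\<alpha> (emb p t) q \<in> carrier (G q)" if "t \<in> carrier (G p)" for t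
    using N_elem[OF q inN[OF that]] by blast
  show ?thesis
  proof (rule isoI)
    show "(\<lambda>t. \<alpha> (emb p t) q) \<in> hom (G p) (G q)"
      unfolding hom_def
    proof (intro CollectI conjI ballI)
      show "(\<lambda>t. \<alpha> (emb p t) q) \<in> carrier (G p) \<rightarrow> carrier (G q)" using cq by blast
      fix s t assume s: "s \<in> carrier (G p)" and t: "t \<in> carrier (G p)"
      have "\<alpha> (emb p (s \<otimes>\<^bsub>G p\<^esub> t)) = \<alpha> (emb p s) \<otimes>\<^bsub>P\<^esub> \<alpha> (emb p t)"
        using emb_mult[OF p s t] hom_mult[OF h emb_carrier[OF p s] emb_carrier[OF p t]] by simp
      then show "\<alpha> (emb p (s \<otimes>\<^bsub>G p\<^esub> t)) q = \<alpha> (emb p s) q \<otimes>\<^bsub>G q\<^esub> \<alpha> (emb p t) q"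
        using q by simp
    qed
    show "bij_betw (\<lambda>t. \<alpha> (emb p t) q) (carrier (G p)) (carrier (G q))"
      unfolding bij_betw_def
    proof
      show "inj_on (\<lambda>t. \<alpha> (emb p t) q) (carrier (G p))"
      proof (rule inj_onI)
        fix s t assume s: "s \<in> carrier (G p)" and t: "t \<in> carrier (G p)"
          and st: "\<alpha> (emb p s) q = \<alpha> (emb p t) q"
        then have "\<alpha> (emb p s) = \<alpha> (emb p t)" using eq[OF s] eq[OF t] by metis
        then have "emb p s = emb p t" using inj emb_carrier[OF p s] emb_carrier[OF p t] by (meson inj_onD)
        then show "s = t" by (rule emb_inj[OF p])
      qed
      show "(\<lambda>t. \<alpha> (emb p t) q) ` carrier (G p) = carrier (G q)"
      proof
        show "(\<lambda>t. \<alpha> (emb p t) q) ` carrier (G p) \<subseteq> carrier (G q)" using cq by blast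
        show "carrier (G q) \<subseteq> (\<lambda>t. \<alpha> (emb p t) q) ` carrier (G p)"
        proof
          fix u assume u: "u \<in> carrier (G q)"
          have "emb q u \<in> \<alpha> ` N p" using NN u unfolding N_def by blast
          then obtain t where t: "t \<in> carrier (G p)" "emb q u = \<alpha> (emb p t)" unfolding N_def by blast
          then have "u = \<alpha> (emb p t) q" using emb_apply[OF q, of u] by simp
          then show "u \<in> (\<lambda>t. \<alpha> (emb p t) q) ` carrier (G p)" using t(1) by blast
        qed
      qed
    qed
  qed
qed

end



context psimp
begin

lemma iso_N_pre:
  assumes a: "\<alpha> \<in> iso P P" and q: "q \<in> I"
  shows "\<exists>p\<in>I. \<alpha> ` N p = N q"
proof -
  have sur: "\<alpha> ` carrier P = carrier P" using a by (auto simp: iso_iff)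
  define \<beta> where "\<beta> = inv_into (carrier P) \<alpha>"
  have b: "\<beta> \<in> iso P P" unfolding \<beta>_def by (rule group.iso_set_sym[OF P_group a])
  obtain p where p: "p \<in> I" "\<beta> ` N q = N p" using iso_N[OF b q] by blast
  have "\<alpha> ` \<beta> ` N q = N q"
    using N_sub_carrier[OF q] sur unfolding \<beta>_def by (simp add: image_inv_into_cancel)
  then show ?thesis using p by metis
qed

lemma auto_image_PiE:
  assumes a: "\<alpha> \<in> iso P P" and A: "\<And>p. p \<in> I \<Longrightarrow> A p \<subseteq> carrier (G p)"
  shows "\<exists>\<sigma>. (\<forall>q\<in>I. \<sigma> q \<in> I \<and> \<alpha> ` N (\<sigma> q) = N q) \<and>
     \<alpha> ` PiE I A = PiE I (\<lambda>q. (\<lambda>t. \<alpha> (emb (\<sigma> q) t) q) ` A (\<sigma> q))"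
proof -
  have h: "\<alpha> \<in> hom P P" and inj: "inj_on \<alpha> (carrier P)" and sur: "\<alpha> ` carrier P = carrier P"
    using a by (auto simp: iso_iff)
  obtain \<sigma> where \<sigma>: "\<And>q. q \<in> I \<Longrightarrow> \<sigma> q \<in> I \<and> \<alpha> ` N (\<sigma> q) = N q"
    using iso_N_pre[OF a] by metis
  have PA: "PiE I A \<subseteq> carrier P" using A by (auto simp: PiE_iff)
  have "\<alpha> ` PiE I A = PiE I (\<lambda>q. (\<lambda>t. \<alpha> (emb (\<sigma> q) t) q) ` A (\<sigma> q))"
  proof
    show "\<alpha> ` PiE I A \<subseteq> PiE I (\<lambda>q. (\<lambda>t. \<alpha> (emb (\<sigma> q) t) q) ` A (\<sigma> q))"
    proof
      fix y assume "y \<in> \<alpha> ` PiE I A"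
      then obtain x where x: "x \<in> PiE I A" "y = \<alpha> x" by blast
      have xc: "x \<in> carrier P" using x PA by blast
      have yc: "y \<in> carrier P" using x(2) hom_in_carrier[OF h xc] by simp
      show "y \<in> PiE I (\<lambda>q. (\<lambda>t. \<alpha> (emb (\<sigma> q) t) q) ` A (\<sigma> q))"
        unfolding PiE_iff
      proof
        show "\<forall>q\<in>I. y q \<in> (\<lambda>t. \<alpha> (emb (\<sigma> q) t) q) ` A (\<sigma> q)"
        proof
          fix q assume q: "q \<in> I"
          have "y q = \<alpha> (emb (\<sigma> q) (x (\<sigma> q))) q"
            using coord_formula[OF h _ q _ xc] \<sigma>[OF q] x(2) by blast
          moreover have "x (\<sigma> q) \<in> A (\<sigma> q)" using x(1) \<sigma>[OF q] by auto
          ultimately show "y q \<in> (\<lambda>t. \<alpha> (emb (\<sigma> q) t) q) ` A (\<sigma> q)" by blast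
        qed
        show "y \<in> extensional I" using yc by (simp add: PiE_iff)
      qed
    qed
    show "PiE I (\<lambda>q. (\<lambda>t. \<alpha> (emb (\<sigma> q) t) q) ` A (\<sigma> q)) \<subseteq> \<alpha> ` PiE I A"
    proof
      fix y assume y: "y \<in> PiE I (\<lambda>q. (\<lambda>t. \<alpha> (emb (\<sigma> q) t) q) ` A (\<sigma> q))"
      have yc: "y \<in> carrier P"
      proof -
        have "y q \<in> carrier (G q)" if q: "q \<in> I" for q
        proof -
          obtain t where t: "t \<in> A (\<sigma> q)" "y q = \<alpha> (emb (\<sigma> q) t) q" using y q by (auto simp: PiE_iff)
          have "t \<in> carrier (G (\<sigma> q))" using t(1) A \<sigma>[OF q] by blast
          then have "\<alpha> (emb (\<sigma> q) t) \<in> carrier P" using \<sigma>[OF q] by (intro hom_in_carrier[OF h] emb_carrier) auto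
          then show ?thesis using t(2) q by auto
        qed
        then show ?thesis using y by (auto simp: PiE_iff)
      qed
      then obtain x where x: "x \<in> carrier P" "y = \<alpha> x" using sur by blast
      have "x \<in> PiE I A"
        unfolding PiE_iff
      proof
        show "\<forall>p\<in>I. x p \<in> A p"
        proof
          fix p assume p: "p \<in> I"
          obtain q where q: "q \<in> I" "\<alpha> ` N p = N q" using iso_N[OF a p] by blast
          have "\<alpha> ` N (\<sigma> q) = \<alpha> ` N p" using \<sigma>[OF q(1)] q(2) by simp
          then have "N (\<sigma> q) = N p"
            using inj_on_image_eq_iff[OF inj N_sub_carrier[OF p] N_sub_carrier] \<sigma>[OF q(1)] by blast
          then have sq: "\<sigma> q = p" using N_subset_eq[OF p] \<sigma>[OF q(1)] by blast
          obtain t where t: "t \<in> A p" "y q = \<alpha> (emb p t) q" using y q(1) sq by (auto simp: PiE_iff)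
          have "y q = \<alpha> (emb p (x p)) q" using coord_formula[OF h p q(1) q(2) x(1)] x(2) by simp
          moreover have "inj_on (\<lambda>t. \<alpha> (emb p t) q) (carrier (G p))"
            using phi_iso[OF a p q(1) q(2)] by (auto simp: iso_iff)
          moreover have "x p \<in> carrier (G p)" using x(1) p by auto
          moreover have "t \<in> carrier (G p)" using t(1) A p by blast
          ultimately have "x p = t" using t(2) by (metis inj_onD)
          then show "x p \<in> A p" using t(1) by simp
        qed
        show "x \<in> extensional I" using x(1) by (simp add: PiE_iff)
      qed
      then show "y \<in> \<alpha> ` PiE I A" using x(2) by blast
    qed
  qed
  then show ?thesis using \<sigma> by blast
qed

end

declare mult_product_group [simp]

context prodgrp
begin

lemma set_mult_PiE:
  "PiE I F <#>\<^bsub>P\<^esub> PiE I H = PiE I (\<lambda>i. F i <#>\<^bsub>G i\<^esub> H i)"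
proof
  show "PiE I F <#>\<^bsub>P\<^esub> PiE I H \<subseteq> PiE I (\<lambda>i. F i <#>\<^bsub>G i\<^esub> H i)"
    unfolding set_mult_def by (auto simp: PiE_iff; blast)
  show "PiE I (\<lambda>i. F i <#>\<^bsub>G i\<^esub> H i) \<subseteq> PiE I F <#>\<^bsub>P\<^esub> PiE I H"
  proof
    fix z assume z: "z \<in> PiE I (\<lambda>i. F i <#>\<^bsub>G i\<^esub> H i)"
    have "\<forall>i\<in>I. \<exists>a b. a \<in> F i \<and> b \<in> H i \<and> z i = a \<otimes>\<^bsub>G i\<^esub> b"
      using z unfolding set_mult_def by (auto simp: PiE_iff; blast)
    then obtain a b where ab: "\<And>i. i \<in> I \<Longrightarrow> a i \<in> F i \<and> b i \<in> H i \<and> z i = a i \<otimes>\<^bsub>G i\<^esub> b i"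
      by metis
    define a' where "a' = restrict a I"
    define b' where "b' = restrict b I"
    have "a' \<in> PiE I F" "b' \<in> PiE I H" using ab by (auto simp: a'_def b'_def)
    moreover have "z = a' \<otimes>\<^bsub>P\<^esub> b'"
      using z ab by (auto simp: a'_def b'_def PiE_iff extensional_def)
    ultimately show "z \<in> PiE I F <#>\<^bsub>P\<^esub> PiE I H" unfolding set_mult_def by blast
  qed
qed

lemma one_P_PiE: "{\<one>\<^bsub>P\<^esub>} = PiE I (\<lambda>i. {\<one>\<^bsub>G i\<^esub>})"
  using PiE_eq_singleton[of I "\<lambda>i. {\<one>\<^bsub>G i\<^esub>}" "\<lambda>i. \<one>\<^bsub>G i\<^esub>"] by simp

lemma set_prod_list_PiE:
  "set_prod_list P (map (PiE I) Fs) = PiE I (\<lambda>i. set_prod_list (G i) (map (\<lambda>F. F i) Fs))"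
  by (induction Fs) (simp_all add: set_prod_list_def one_P_PiE[simplified] set_mult_PiE)

lemma conj_set_PiE:
  assumes g: "g \<in> carrier P" and F: "\<And>i. i \<in> I \<Longrightarrow> F i \<subseteq> carrier (G i)"
  shows "conj_set P g (PiE I F) = PiE I (\<lambda>i. conj_set (G i) (g i) (F i))"
proof -
  have ginv: "inv\<^bsub>P\<^esub> g = (\<lambda>i\<in>I. inv\<^bsub>G i\<^esub> g i)" using g grp by simp
  show ?thesis
  proof
    show "conj_set P g (PiE I F) \<subseteq> PiE I (\<lambda>i. conj_set (G i) (g i) (F i))"
      unfolding conj_set_eq ginv by (auto simp: PiE_iff)
    show "PiE I (\<lambda>i. conj_set (G i) (g i) (F i)) \<subseteq> conj_set P g (PiE I F)"
    proof
      fix z assume z: "z \<in> PiE I (\<lambda>i. conj_set (G i) (g i) (F i))"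
      have "\<forall>i\<in>I. \<exists>a. a \<in> F i \<and> z i = g i \<otimes>\<^bsub>G i\<^esub> a \<otimes>\<^bsub>G i\<^esub> inv\<^bsub>G i\<^esub> g i"
        using z unfolding conj_set_eq by (auto simp: PiE_iff)
      then obtain a where a: "\<And>i. i \<in> I \<Longrightarrow> a i \<in> F i \<and> z i = g i \<otimes>\<^bsub>G i\<^esub> a i \<otimes>\<^bsub>G i\<^esub> inv\<^bsub>G i\<^esub> g i"
        by metis
      define a' where "a' = restrict a I"
      have "a' \<in> PiE I F" using a by (auto simp: a'_def)
      moreover have "z = g \<otimes>\<^bsub>P\<^esub> a' \<otimes>\<^bsub>P\<^esub> inv\<^bsub>P\<^esub> g"
        using z a unfolding ginv by (auto simp: a'_def PiE_iff extensional_def)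
      ultimately show "z \<in> conj_set P g (PiE I F)" unfolding conj_set_eq by blast
    qed
  qed
qed


lemma normalizer_PiE:
  assumes S: "\<And>i. i \<in> I \<Longrightarrow> subgroup (A i) (G i)"
    and Nz: "\<And>i. i \<in> I \<Longrightarrow> normalizer_set (G i) (A i) = A i"
  shows "normalizer_set P (PiE I A) = PiE I A"
proof -
  have Asub: "\<And>i. i \<in> I \<Longrightarrow> A i \<subseteq> carrier (G i)" using S subgroup.subset by blast
  have Ane: "\<And>i. i \<in> I \<Longrightarrow> A i \<noteq> {}" using S subgroup.one_closed by blast
  show ?thesis
  proof
    show "normalizer_set P (PiE I A) \<subseteq> PiE I A"
    proof
      fix g assume "g \<in> normalizer_set P (PiE I A)"
      then have g: "g \<in> carrier P" and eq: "conj_set P g (PiE I A) = PiE I A"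
        unfolding normalizer_set_def by auto
      have "PiE I (\<lambda>i. conj_set (G i) (g i) (A i)) = PiE I A"
        using eq conj_set_PiE[OF g Asub] by simp
      then have "\<forall>i\<in>I. conj_set (G i) (g i) (A i) = A i"
        using Ane by (auto simp: PiE_eq_iff)
      then have "\<forall>i\<in>I. g i \<in> normalizer_set (G i) (A i)"
        using g unfolding normalizer_set_def by auto
      then have "\<forall>i\<in>I. g i \<in> A i" using Nz by blast
      then show "g \<in> PiE I A" using g by (auto simp: PiE_iff)
    qed
    show "PiE I A \<subseteq> normalizer_set P (PiE I A)"
    proof
      fix g assume gA: "g \<in> PiE I A"
      then have g: "g \<in> carrier P" using Asub by (auto simp: PiE_iff)
      have "\<forall>i\<in>I. conj_set (G i) (g i) (A i) = A i"
      proof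
        fix i assume i: "i \<in> I"
        then have "g i \<in> normalizer_set (G i) (A i)" using gA Nz by (auto simp: PiE_iff)
        then show "conj_set (G i) (g i) (A i) = A i" unfolding normalizer_set_def by blast
      qed
      then have "conj_set P g (PiE I A) = PiE I A"
        using conj_set_PiE[OF g Asub] by (simp add: PiE_eq_iff)
      then show "g \<in> normalizer_set P (PiE I A)" using g unfolding normalizer_set_def by blast
    qed
  qed
qed

end




lemma Inf_enat_mem: "(S::enat set) \<noteq> {} \<Longrightarrow> Inf S \<in> S"
  unfolding Inf_enat_def by (auto intro: LeastI)

lemma gamma_attained:
  assumes "gamma_ss_cp H \<noteq> \<infinity>"
  shows "\<exists>A As. special_solvable_cp_fact H A As \<and> gamma_ss_cp H = enat (length As)"
proof -
  define S where "S = {enat (length As) | A As. special_solvable_cp_fact H A As}"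
  have "S \<noteq> {}" using assms unfolding gamma_ss_cp_def S_def[symmetric] by (auto simp: Inf_enat_def)
  then have "Inf S \<in> S" by (rule Inf_enat_mem)
  then show ?thesis unfolding gamma_ss_cp_def S_def[symmetric] by (auto simp: S_def)
qed

lemma gamma_le:
  assumes "special_solvable_cp_fact H A As" shows "gamma_ss_cp H \<le> enat (length As)"
  unfolding gamma_ss_cp_def using assms by (auto intro: Inf_lower)

lemma auto_imp_iso: "\<alpha> \<in> auto H \<Longrightarrow> \<alpha> \<in> iso H H"
  by (auto simp: auto_def Bij_def iso_def)

theorem lemma13:
  fixes T :: "nat \<Rightarrow> ('a, 'b) monoid_scheme" and r :: "nat \<Rightarrow> nat" and m :: nat
  assumes "m \<ge> 1"
    and "\<forall>j<m. simple_group (T j) \<and> finite (carrier (T j)) \<and> \<not> comm_group (T j)"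
    and "\<forall>i<m. \<forall>j<m. i \<noteq> j \<longrightarrow> \<not> (T i \<cong> T j)"
    and "\<forall>j<m. r j \<ge> 1"
  shows "gamma_ss_cp (product_group (SIGMA j:{..<m}. {..<r j}) (\<lambda>p. T (fst p)))
           \<le> Max ((\<lambda>j. gamma_ss_cp (T j)) ` {..<m})"
proof (cases "\<exists>j<m. gamma_ss_cp (T j) = \<infinity>")
  case True
  then obtain j where j: "j < m" "gamma_ss_cp (T j) = \<infinity>" by blast
  have "\<infinity> \<le> Max ((\<lambda>j. gamma_ss_cp (T j)) ` {..<m})"
  proof (rule Max_ge)
    show "\<infinity> \<in> (\<lambda>j. gamma_ss_cp (T j)) ` {..<m}" using j by (metis image_eqI lessThan_iff)
  qed simp
  then show ?thesis by (simp add: top_unique[where 'a=enat, unfolded top_enat_def] )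
next
  case False
  define I where "I = (SIGMA j:{..<m}. {..<r j})"
  define G where "G = (\<lambda>p::nat\<times>nat. T (fst p))"
  have Ifst: "\<And>p. p \<in> I \<Longrightarrow> fst p < m" unfolding I_def by auto
  have finI: "finite I" unfolding I_def by auto
  have Tsg: "\<And>j. j < m \<Longrightarrow> simple_group (T j)" using assms(2) by blast
  have Tg: "\<And>j. j < m \<Longrightarrow> group (T j)" using Tsg simple_group.axioms(1) by blast
  have GI: "\<And>i. i \<in> I \<Longrightarrow> group (G i) \<and> simple_group (G i) \<and> \<not> comm_group (G i)"
    using Ifst assms(2) Tg unfolding G_def by auto
  have "psimp I G" by (intro psimp.intro prodgrp.intro psimp_axioms.intro) (simp_all add: GI)
  then interpret psimp I G .
  have "\<forall>j<m. \<exists>A As. special_solvable_cp_fact (T j) A As \<and> gamma_ss_cp (T j) = enat (length As)"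
    using False gamma_attained by blast
  then obtain A As where AAs: "\<And>j. j < m \<Longrightarrow> special_solvable_cp_fact (T j) (A j) (As j) \<and>
      gamma_ss_cp (T j) = enat (length (As j))" by metis
  have sp: "\<And>j. j < m \<Longrightarrow> special_solvable_cp_fact (T j) (A j) (As j)" using AAs by blast
  have Asub: "\<And>j. j < m \<Longrightarrow> subgroup (A j) (T j)" using sp unfolding special_solvable_cp_fact_def by blast
  have Acar: "\<And>j. j < m \<Longrightarrow> A j \<subseteq> carrier (T j)" using Asub subgroup.subset by blast
  define len where "len = (\<lambda>j. length (As j))"
  define k where "k = Max (len ` {..<m})"
  have lenk: "\<And>j. j < m \<Longrightarrow> len j \<le> k" unfolding k_def by (intro Max_ge) auto
  obtain j0 where j0: "j0 < m" "k = len j0"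
  proof -
    have m0: "0 \<in> {..<m}" using assms(1) by simp
    have "k \<in> len ` {..<m}" unfolding k_def using m0 by (intro Max_in) auto
    then show ?thesis using that by auto
  qed
  have kpos: "k \<ge> 1"
  proof -
    have "As 0 \<noteq> []" using sp[of 0] assms(1) unfolding special_solvable_cp_fact_def by auto
    then show ?thesis using lenk[of 0] assms(1) unfolding len_def by (cases "As 0") auto
  qed
  have Kle: "enat k \<le> Max ((\<lambda>j. gamma_ss_cp (T j)) ` {..<m})"
  proof -
    have "enat k = gamma_ss_cp (T j0)" using AAs[OF j0(1)] j0(2) len_def by simp
    also have "\<dots> \<le> Max ((\<lambda>j. gamma_ss_cp (T j)) ` {..<m})" using j0(1) by (intro Max_ge) auto
    finally show ?thesis .
  qed
  define Cs where "Cs = (\<lambda>j. replicate (k - len j) (A j) @ As j)"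
  have Cslen: "\<And>j. j < m \<Longrightarrow> length (Cs j) = k" unfolding Cs_def using lenk len_def by auto
  have Csprod: "\<And>j. j < m \<Longrightarrow> set_prod_list (T j) (Cs j) = carrier (T j)"
    unfolding Cs_def using sp Asub Tg
    by (intro group.set_prod_list_pad) (auto simp: special_solvable_cp_fact_def)
  have Csconj: "\<And>j B. j < m \<Longrightarrow> B \<in> set (Cs j) \<Longrightarrow> \<exists>g\<in>carrier (T j). B = conj_set (T j) g (A j)"
  proof -
    fix j B assume j: "j < m" and B: "B \<in> set (Cs j)"
    show "\<exists>g\<in>carrier (T j). B = conj_set (T j) g (A j)"
    proof (cases "B \<in> set (As j)")
      case True then show ?thesis using sp[OF j] unfolding special_solvable_cp_fact_def by blast
    next
      case False
      then have "B = A j" using B unfolding Cs_def by (auto split: if_splits)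
      then have "B = conj_set (T j) \<one>\<^bsub>T j\<^esub> (A j)" using group.conj_set_one[OF Tg[OF j] Acar[OF j]] by simp
      then show ?thesis using group.is_monoid[OF Tg[OF j]] monoid.one_closed by blast
    qed
  qed
  define Astar where "Astar = PiE I (\<lambda>p. A (fst p))"
  define Fs where "Fs = map (\<lambda>i. \<lambda>p::nat\<times>nat. Cs (fst p) ! i) [0..<k]"
  define Bs where "Bs = map (PiE I) Fs"
  have AstarG: "\<And>p. p \<in> I \<Longrightarrow> A (fst p) \<subseteq> carrier (G p)" using Acar Ifst unfolding G_def by blast
  have "special_solvable_cp_fact P Astar Bs"
    unfolding special_solvable_cp_fact_def
  proof (intro conjI)
    show "subgroup Astar P" unfolding Astar_def
      using PiE_subgroup_product_group[of I G "\<lambda>p. A (fst p)"] grp Asub Ifst unfolding G_def by auto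
    show "Bs \<noteq> []" unfolding Bs_def Fs_def using kpos by auto
    show "\<forall>B\<in>set Bs. \<exists>g\<in>carrier P. B = conj_set P g Astar"
    proof
      fix B assume "B \<in> set Bs"
      then obtain i where i: "i < k" "B = PiE I (\<lambda>p. Cs (fst p) ! i)" unfolding Bs_def Fs_def by auto
      have "\<forall>p\<in>I. \<exists>g\<in>carrier (G p). Cs (fst p) ! i = conj_set (G p) g (A (fst p))"
      proof
        fix p assume p: "p \<in> I"
        have "Cs (fst p) ! i \<in> set (Cs (fst p))" using i(1) Cslen Ifst[OF p] by auto
        then show "\<exists>g\<in>carrier (G p). Cs (fst p) ! i = conj_set (G p) g (A (fst p))"
          using Csconj Ifst[OF p] unfolding G_def by blast
      qed
      then obtain g where g: "\<And>p. p \<in> I \<Longrightarrow> g p \<in> carrier (G p) \<and> Cs (fst p) ! i = conj_set (G p) (g p) (A (fst p))"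
        by metis
      define gg where "gg = restrict g I"
      have ggc: "gg \<in> carrier P" using g by (auto simp: gg_def)
      have "conj_set P gg Astar = PiE I (\<lambda>p. conj_set (G p) (gg p) (A (fst p)))"
        unfolding Astar_def by (rule conj_set_PiE[OF ggc AstarG])
      also have "\<dots> = B" unfolding i(2) using g by (intro PiE_cong) (auto simp: gg_def)
      finally show "\<exists>g\<in>carrier P. B = conj_set P g Astar" using ggc by metis
    qed
    show "set_prod_list P Bs = carrier P"
    proof -
      have "set_prod_list P Bs = PiE I (\<lambda>p. set_prod_list (G p) (map (\<lambda>F. F p) Fs))"
        unfolding Bs_def by (rule set_prod_list_PiE)
      also have "\<dots> = PiE I (\<lambda>p. carrier (G p))"
      proof (rule PiE_cong)
        fix p assume p: "p \<in> I"
        have "map (\<lambda>F. F p) Fs = Cs (fst p)"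
          unfolding Fs_def using Cslen[OF Ifst[OF p]] by (auto intro: nth_equalityI)
        then show "set_prod_list (G p) (map (\<lambda>F. F p) Fs) = carrier (G p)"
          using Csprod Ifst[OF p] unfolding G_def by simp
      qed
      finally show ?thesis by simp
    qed
    show "solvable (P\<lparr>carrier := Astar\<rparr>)"
      unfolding Astar_def product_subgroup_eq
    proof (rule solvable_product[OF finI])
      fix p assume p: "p \<in> I"
      have "subgroup (A (fst p)) (G p)" using Asub Ifst[OF p] unfolding G_def by blast
      moreover have "solvable (G p\<lparr>carrier := A (fst p)\<rparr>)"
        using sp Ifst[OF p] unfolding G_def special_solvable_cp_fact_def by blast
      ultimately show "group (G p\<lparr>carrier := A (fst p)\<rparr>) \<and> solvable (G p\<lparr>carrier := A (fst p)\<rparr>)"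
        using grp[OF p] subgroup.subgroup_is_group by blast
    qed
    show "normalizer_set P Astar = Astar"
      unfolding Astar_def
      by (rule normalizer_PiE) (use Asub Ifst sp in \<open>auto simp: G_def special_solvable_cp_fact_def\<close>)
    show "\<forall>\<alpha>\<in>auto P. \<exists>g\<in>carrier P. \<alpha> ` Astar = conj_set P g Astar"
    proof
      fix \<alpha> assume "\<alpha> \<in> auto P"
      then have a: "\<alpha> \<in> iso P P" by (rule auto_imp_iso)
      obtain \<sigma> where \<sigma>: "\<forall>q\<in>I. \<sigma> q \<in> I \<and> \<alpha> ` N (\<sigma> q) = N q"
        and img: "\<alpha> ` Astar = PiE I (\<lambda>q. (\<lambda>t. \<alpha> (emb (\<sigma> q) t) q) ` A (fst (\<sigma> q)))"
        using auto_image_PiE[OF a AstarG] unfolding Astar_def by blast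
      have key: "\<exists>g\<in>carrier (G q). (\<lambda>t. \<alpha> (emb (\<sigma> q) t) q) ` A (fst (\<sigma> q)) = conj_set (G q) g (A (fst q))"
        if q: "q \<in> I" for q
      proof -
        have sq: "\<sigma> q \<in> I" "\<alpha> ` N (\<sigma> q) = N q" using \<sigma> q by auto
        have phi: "(\<lambda>t. \<alpha> (emb (\<sigma> q) t) q) \<in> iso (G (\<sigma> q)) (G q)" by (rule phi_iso[OF a sq(1) q sq(2)])
        have "fst (\<sigma> q) = fst q"
        proof (rule ccontr)
          assume "fst (\<sigma> q) \<noteq> fst q"
          moreover have "T (fst (\<sigma> q)) \<cong> T (fst q)" using phi unfolding G_def by (rule is_isoI)
          ultimately show False using assms(3) Ifst[OF sq(1)] Ifst[OF q] by blast
        qed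
        then have phi': "(\<lambda>t. \<alpha> (emb (\<sigma> q) t) q) \<in> iso (T (fst q)) (T (fst q))" using phi unfolding G_def by simp
        define \<psi> where "\<psi> = restrict (\<lambda>t. \<alpha> (emb (\<sigma> q) t) q) (carrier (T (fst q)))"
        have jq: "fst q < m" using Ifst[OF q] .
        have psiiso: "\<psi> \<in> iso (T (fst q)) (T (fst q))"
          unfolding \<psi>_def by (rule group.iso_eq[OF Tg[OF jq] phi']) simp
        have "\<psi> \<in> auto (T (fst q))"
          using psiiso unfolding auto_def Bij_def iso_def \<psi>_def by auto
        then obtain g where g: "g \<in> carrier (T (fst q))" "\<psi> ` A (fst q) = conj_set (T (fst q)) g (A (fst q))"
          using sp[OF jq] unfolding special_solvable_cp_fact_def by blast
        have "\<psi> ` A (fst q) = (\<lambda>t. \<alpha> (emb (\<sigma> q) t) q) ` A (fst (\<sigma> q))"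
          using Acar[OF jq] \<open>fst (\<sigma> q) = fst q\<close> unfolding \<psi>_def by (auto simp: image_iff subset_iff)
        then show ?thesis using g unfolding G_def by auto
      qed
      then obtain g where g: "\<And>q. q \<in> I \<Longrightarrow> g q \<in> carrier (G q) \<and>
          (\<lambda>t. \<alpha> (emb (\<sigma> q) t) q) ` A (fst (\<sigma> q)) = conj_set (G q) (g q) (A (fst q))" by metis
      define gg where "gg = restrict g I"
      have ggc: "gg \<in> carrier P" using g by (auto simp: gg_def)
      have "conj_set P gg Astar = PiE I (\<lambda>p. conj_set (G p) (gg p) (A (fst p)))"
        unfolding Astar_def by (rule conj_set_PiE[OF ggc AstarG])
      also have "\<dots> = \<alpha> ` Astar" unfolding img using g by (intro PiE_cong) (auto simp: gg_def)
      finally show "\<exists>g\<in>carrier P. \<alpha> ` Astar = conj_set P g Astar" using ggc by metis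
    qed
  qed
  then have "gamma_ss_cp P \<le> enat (length Bs)" by (rule gamma_le)
  also have "length Bs = k" unfolding Bs_def Fs_def by simp
  finally show ?thesis using Kle unfolding I_def G_def by (rule order_trans)
qed


end
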